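(* Let $(S,H)$ be a polarized K3 surface with $H^2=2d$, $d>0$ an integer, and let $\tau_d$ be the Hodge isometry of $\widetilde H(S,\mathbb Z)=H^0\oplus H^2\oplus H^4$ induced by the autoequivalence $\mathsf O_d=\mathsf T_{\mathcal O_S}\circ(-\otimes\mathcal O_S(H))$ of $D^b(S)$, i.e. $\tau_d(r,\Delta,s)=(-dr-H\cdot\Delta-s,\ rH+\Delta,\ -r)$. Then for a nonzero integer $n$, one has $\tau_d^{2n}=\mathrm{id}$ if and only if $(d,n)$ is one of $(1,3k)$, $(2,2k)$, $(3,3k)$ for some nonzero integer $k$.
   Context: $\mathsf T_{\mathcal O_S}$ denotes the spherical twist $F\mapsto\mathrm{Cone}(\mathrm{RHom}(\mathcal O_S,F)\otimes\mathcal O_S\to F)$. Elements of $\widetilde H(S,\mathbb Z)$ are written $(r,\Delta,s)$ with $r\in H^0$, $\Delta\in H^2(S,\mathbb Z)$, $s\in H^4$. *)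

theory Defs
  imports Main
begin

text \<open>The K3 lattice H^2(S,Z) = U^3 + E8(-1)^2, realised on Z^22, i.e. on
  integer vectors indexed by 0..21 (functions nat => int vanishing from 22 on).
  Indices 0..5: three hyperbolic planes U (pairs (0,1),(2,3),(4,5)).
  Indices 6..13 and 14..21: two copies of E8(-1), Dynkin diagram a chain
  0-1-2-3-4-5-6 with node 7 attached to node 4 (local numbering).\<close>

definition K3_lattice :: "(nat \<Rightarrow> int) set" where
  "K3_lattice = {v. \<forall>i\<ge>22. v i = 0}"

definition E8_adj :: "nat \<Rightarrow> nat \<Rightarrow> bool" where
  "E8_adj a b \<longleftrightarrow> (a < 7 \<and> b < 7 \<and> (a = b + 1 \<or> b = a + 1)) \<or>
                   (a = 4 \<and> b = 7) \<or> (a = 7 \<and> b = 4)"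

definition E8_neg_gram :: "nat \<Rightarrow> nat \<Rightarrow> int" where
  "E8_neg_gram a b = (if a = b then -2 else if E8_adj a b then 1 else 0)"

definition K3_gram :: "nat \<Rightarrow> nat \<Rightarrow> int" where
  "K3_gram i j =
    (if i < 6 \<and> j < 6 then (if i div 2 = j div 2 \<and> i \<noteq> j then 1 else 0)
     else if 6 \<le> i \<and> i < 14 \<and> 6 \<le> j \<and> j < 14 then E8_neg_gram (i - 6) (j - 6)
     else if 14 \<le> i \<and> i < 22 \<and> 14 \<le> j \<and> j < 22 then E8_neg_gram (i - 14) (j - 14)
     else 0)"

definition k3_form :: "(nat \<Rightarrow> int) \<Rightarrow> (nat \<Rightarrow> int) \<Rightarrow> int" where
  "k3_form v w = (\<Sum>i<22. \<Sum>j<22. v i * K3_gram i j * w j)"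

definition mukai_lattice :: "(int \<times> (nat \<Rightarrow> int) \<times> int) set" where
  "mukai_lattice = UNIV \<times> K3_lattice \<times> UNIV"

definition tau :: "int \<Rightarrow> (nat \<Rightarrow> int) \<Rightarrow> int \<times> (nat \<Rightarrow> int) \<times> int \<Rightarrow> int \<times> (nat \<Rightarrow> int) \<times> int" where
  "tau d H x = (case x of (r, D, s) \<Rightarrow>
      (- d * r - k3_form H D - s, (\<lambda>i. r * H i + D i), - r))"

definition tau_pow :: "int \<Rightarrow> (nat \<Rightarrow> int) \<Rightarrow> int \<Rightarrow> int \<times> (nat \<Rightarrow> int) \<times> int \<Rightarrow> int \<times> (nat \<Rightarrow> int) \<times> int" where
  "tau_pow d H m = (if 0 \<le> m then tau d H ^^ nat m
                    else inv_into mukai_lattice (tau d H) ^^ nat (- m))"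

end

theory Submission
  imports Defs
begin

definition Fm :: "int \<Rightarrow> int \<Rightarrow> int \<times> int \<times> int \<Rightarrow> int \<times> int \<times> int" where
  "Fm d a v = (case v of (r, c, s) \<Rightarrow> (- d * r - a - 2 * d * c - s, c + r, - r))"

definition Gm :: "int \<Rightarrow> int \<times> int \<times> int \<Rightarrow> int \<times> int \<times> int" where
  "Gm d v = (case v of (r, c, s) \<Rightarrow> (d * r + 2 * d * c + s, - c - r, r))"

lemma k3_form_lin:
  "k3_form H (\<lambda>i. D i + c * H i) = k3_form H D + c * k3_form H H"
  by (simp add: k3_form_def algebra_simps sum.distrib sum_distrib_left)

lemma tau_iter:
  assumes "k3_form H H = 2 * d"
  shows "\<forall>r c s. (tau d H ^^ k) (r, \<lambda>i. D i + c * H i, s) =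
     (case (Fm d (k3_form H D) ^^ k) (r, c, s) of (r', c', s') \<Rightarrow> (r', \<lambda>i. D i + c' * H i, s'))"
proof (induction k)
  case 0
  then show ?case by simp
next
  case (Suc k)
  show ?case
  proof (intro allI)
    fix r c s
    have e: "tau d H (r, \<lambda>i. D i + c * H i, s) =
      (- d * r - k3_form H D - 2 * d * c - s, \<lambda>i. D i + (c + r) * H i, - r)"
      by (simp add: tau_def k3_form_lin assms algebra_simps)
    show "(tau d H ^^ Suc k) (r, \<lambda>i. D i + c * H i, s) =
     (case (Fm d (k3_form H D) ^^ Suc k) (r, c, s) of (r', c', s') \<Rightarrow> (r', \<lambda>i. D i + c' * H i, s'))"
      unfolding funpow_Suc_right o_apply e using Suc.IH
      by (simp add: Fm_def[of d "k3_form H D" "(r, c, s)"])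
  qed
qed

lemma funpow_mod:
  assumes "f ^^ p = id"
  shows "f ^^ k = f ^^ (k mod p)"
proof -
  have "f ^^ k = f ^^ (k mod p + p * (k div p))" by simp
  also have "\<dots> = f ^^ (k mod p) \<circ> (f ^^ p) ^^ (k div p)"
    by (simp only: funpow_add funpow_mult)
  also have "\<dots> = f ^^ (k mod p)" by (simp add: assms)
  finally show ?thesis .
qed

lemma F1_6: "Fm 1 a ^^ 6 = id"
  by (auto simp: fun_eq_iff Fm_def eval_nat_numeral algebra_simps)
lemma F3_6: "Fm 3 a ^^ 6 = id"
  by (auto simp: fun_eq_iff Fm_def eval_nat_numeral algebra_simps)
lemma F2_4: "Fm 2 a ^^ 4 = id"
  by (auto simp: fun_eq_iff Fm_def eval_nat_numeral algebra_simps)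

lemma c12: "(Fm 1 0 ^^ 2) (1, 0, 0) \<noteq> (1, 0, 0)" by (simp add: Fm_def eval_nat_numeral)
lemma c14: "(Fm 1 0 ^^ 4) (1, 0, 0) \<noteq> (1, 0, 0)" by (simp add: Fm_def eval_nat_numeral)
lemma c32: "(Fm 3 0 ^^ 2) (1, 0, 0) \<noteq> (1, 0, 0)" by (simp add: Fm_def eval_nat_numeral)
lemma c34: "(Fm 3 0 ^^ 4) (1, 0, 0) \<noteq> (1, 0, 0)" by (simp add: Fm_def eval_nat_numeral)
lemma c22: "(Fm 2 0 ^^ 2) (1, 0, 0) \<noteq> (1, 0, 0)" by (simp add: Fm_def eval_nat_numeral)

lemma FG: "Fm d 0 ^^ 2 = Gm d ^^ 2"
  by (auto simp: fun_eq_iff Fm_def Gm_def eval_nat_numeral algebra_simps)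

definition phi :: "int \<times> int \<times> int \<Rightarrow> int" where
  "phi v = (case v of (r, c, s) \<Rightarrow> r - s)"
definition psi :: "int \<Rightarrow> int \<times> int \<times> int \<Rightarrow> int" where
  "psi d v = (case v of (r, c, s) \<Rightarrow> (d - 2) * r + 2 * d * c + 2 * s)"

lemma G_step:
  assumes "d \<ge> 4" "phi v \<ge> 1" "psi d v \<ge> 2"
  shows "phi (Gm d v) \<ge> phi v + 2 \<and> psi d (Gm d v) \<ge> 2"
proof -
  obtain r c s where v: "v = (r, c, s)" by (cases v) auto
  have a: "phi (Gm d v) = phi v + psi d v"
    by (simp add: v phi_def psi_def Gm_def algebra_simps)
  have b: "psi d (Gm d v) = psi d v + (d - 4) * phi (Gm d v)"
    by (simp add: v phi_def psi_def Gm_def algebra_simps)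
  have "(d - 4) * phi (Gm d v) \<ge> 0" using a assms by simp
  then have "psi d (Gm d v) \<ge> 2" using b assms by linarith
  then show ?thesis using a assms by simp
qed

lemma G_iter:
  assumes "d \<ge> 4"
  shows "phi ((Gm d ^^ j) (1, 0, 0)) \<ge> 1 + 2 * int j \<and> psi d ((Gm d ^^ j) (1, 0, 0)) \<ge> 2"
proof (induction j)
  case 0
  then show ?case using assms by (simp add: phi_def psi_def)
next
  case (Suc j)
  then show ?case using G_step[OF assms, of "(Gm d ^^ j) (1, 0, 0)"] by simp
qed

lemma F_big:
  assumes "d \<ge> 4" "j > 0"
  shows "(Fm d 0 ^^ (2 * j)) (1, 0, 0) \<noteq> (1, 0, 0)"
proof
  assume h: "(Fm d 0 ^^ (2 * j)) (1, 0, 0) = (1, 0, 0)"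
  have "Fm d 0 ^^ (2 * j) = Gm d ^^ (2 * j)"
    by (simp only: funpow_mult[symmetric] FG)
  then have "(Gm d ^^ (2 * j)) (1, 0, 0) = (1, 0, 0)" using h by simp
  moreover have "phi ((Gm d ^^ (2 * j)) (1, 0, 0)) \<ge> 1 + 2 * int (2 * j)"
    using G_iter[OF assms(1)] by blast
  ultimately show False using assms(2) by (simp add: phi_def)
qed


lemma T_in:
  assumes "H \<in> K3_lattice" "x \<in> mukai_lattice"
  shows "tau d H x \<in> mukai_lattice"
  using assms by (auto simp: tau_def mukai_lattice_def K3_lattice_def split: prod.splits)

lemma T_inj: "inj (tau d H)"
proof (rule injI)
  fix x y assume h: "tau d H x = tau d H y"
  obtain r D s where x: "x = (r, D, s)" by (cases x) auto
  obtain r2 D2 s2 where y: "y = (r2, D2, s2)" by (cases y) auto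
  from h have r: "r = r2" by (simp add: x y tau_def)
  from h have D: "D = D2" using r by (auto simp: x y tau_def fun_eq_iff)
  from h have s: "s = s2" by (simp add: x y tau_def r D)
  show "x = y" using x y r D s by simp
qed

lemma T_surj:
  assumes "H \<in> K3_lattice" "y \<in> mukai_lattice"
  shows "y \<in> tau d H ` mukai_lattice"
proof -
  obtain r' D' s' where y: "y = (r', D', s')" by (cases y) auto
  define D where "D = (\<lambda>i. D' i + s' * H i)"
  define x where "x = (- s', D, - d * (- s') - k3_form H D - r')"
  have "x \<in> mukai_lattice" using assms
    by (auto simp: x_def D_def y mukai_lattice_def K3_lattice_def)
  moreover have "tau d H x = y"
    by (simp add: x_def D_def y tau_def fun_eq_iff)
  ultimately show ?thesis by blast
qed

lemma inv_equiv:
  assumes "H \<in> K3_lattice"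
  shows "(\<forall>x\<in>mukai_lattice. (inv_into mukai_lattice (tau d H) ^^ k) x = x) \<longleftrightarrow>
         (\<forall>x\<in>mukai_lattice. (tau d H ^^ k) x = x)"
proof -
  let ?L = mukai_lattice and ?T = "tau d H"
  let ?I = "inv_into ?L ?T"
  have I1: "?I (?T x) = x" if "x \<in> ?L" for x
    using T_inj that by (metis inv_into_f_f inj_on_subset subset_UNIV)
  have I2: "?T (?I y) = y" if "y \<in> ?L" for y
    using T_surj[OF assms that] by (simp add: f_inv_into_f)
  have I3: "?I y \<in> ?L" if "y \<in> ?L" for y
    using T_surj[OF assms that] by (simp add: inv_into_into)
  have TL: "(?T ^^ j) x \<in> ?L" if "x \<in> ?L" for x j
    using that by (induction j) (auto intro: T_in[OF assms])
  have IL: "(?I ^^ j) x \<in> ?L" if "x \<in> ?L" for x j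
    using that by (induction j) (auto intro: I3)
  have A: "(?T ^^ j) ((?I ^^ j) x) = x" if "x \<in> ?L" for x j
    using that
  proof (induction j arbitrary: x)
    case 0 then show ?case by simp
  next
    case (Suc j)
    have "(?T ^^ Suc j) ((?I ^^ Suc j) x) = (?T ^^ j) (?T (?I ((?I ^^ j) x)))"
      by (simp only: funpow_Suc_right[of j ?T] funpow.simps(2)[of j ?I] o_apply)
    also have "\<dots> = (?T ^^ j) ((?I ^^ j) x)" using I2 IL Suc.prems by simp
    finally show ?case using Suc by simp
  qed
  have B: "(?I ^^ j) ((?T ^^ j) x) = x" if "x \<in> ?L" for x j
    using that
  proof (induction j arbitrary: x)
    case 0 then show ?case by simp
  next
    case (Suc j)
    have "(?I ^^ Suc j) ((?T ^^ Suc j) x) = (?I ^^ j) (?I (?T ((?T ^^ j) x)))"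
      by (simp only: funpow_Suc_right[of j ?I] funpow.simps(2)[of j ?T] o_apply)
    also have "\<dots> = (?I ^^ j) ((?T ^^ j) x)" using I1 TL Suc.prems by simp
    finally show ?case using Suc by simp
  qed
  show ?thesis
  proof
    assume h: "\<forall>x\<in>?L. (?I ^^ k) x = x"
    show "\<forall>x\<in>?L. (?T ^^ k) x = x"
    proof
      fix x assume x: "x \<in> ?L"
      have "(?T ^^ k) x = (?I ^^ k) ((?T ^^ k) x)" using h TL[OF x] by simp
      also have "\<dots> = x" using B[OF x] .
      finally show "(?T ^^ k) x = x" .
    qed
  next
    assume h: "\<forall>x\<in>?L. (?T ^^ k) x = x"
    show "\<forall>x\<in>?L. (?I ^^ k) x = x"
    proof
      fix x assume x: "x \<in> ?L"
      have "(?I ^^ k) x = (?T ^^ k) ((?I ^^ k) x)" using h IL[OF x] by simp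
      also have "\<dots> = x" using A[OF x] .
      finally show "(?I ^^ k) x = x" .
    qed
  qed
qed

lemma fixed_from_F:
  assumes "k3_form H H = 2 * d" "\<And>a r s. (Fm d a ^^ k) (r, 0, s) = (r, 0, s)"
  shows "\<forall>x\<in>mukai_lattice. (tau d H ^^ k) x = x"
proof
  fix x assume "x \<in> mukai_lattice"
  obtain r D s where x: "x = (r, D, s)" by (cases x) auto
  have "(tau d H ^^ k) (r, \<lambda>i. D i + 0 * H i, s) =
     (case (Fm d (k3_form H D) ^^ k) (r, 0, s) of (r', c', s') \<Rightarrow> (r', \<lambda>i. D i + c' * H i, s'))"
    using tau_iter[OF assms(1), of k D] by blast
  then have "(tau d H ^^ k) (r, \<lambda>i. D i + 0 * H i, s) = (r, \<lambda>i. D i + 0 * H i, s)"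
    using assms(2)[of "k3_form H D" r s] by simp
  then show "(tau d H ^^ k) x = x" by (simp add: x)
qed

lemma notfixed:
  assumes "k3_form H H = 2 * d" "d > 0" "(Fm d 0 ^^ k) (1, 0, 0) \<noteq> (1, 0, 0)"
  shows "\<not> (\<forall>x\<in>mukai_lattice. (tau d H ^^ k) x = x)"
proof
  assume h: "\<forall>x\<in>mukai_lattice. (tau d H ^^ k) x = x"
  have z: "k3_form H (\<lambda>i. 0) = 0" by (simp add: k3_form_def)
  have mem: "(1, \<lambda>i. 0, 0) \<in> mukai_lattice" by (simp add: mukai_lattice_def K3_lattice_def)
  obtain r' c' s' where F: "(Fm d 0 ^^ k) (1, 0, 0) = (r', c', s')" by (cases "(Fm d 0 ^^ k) (1, 0, 0)") auto
  have "(tau d H ^^ k) (1, \<lambda>i. 0 + 0 * H i, 0) =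
     (case (Fm d (k3_form H (\<lambda>i. 0)) ^^ k) (1, 0, 0) of (r', c', s') \<Rightarrow> (r', \<lambda>i. 0 + c' * H i, s'))"
    using tau_iter[OF assms(1), of k "\<lambda>i. 0"] by blast
  then have "(tau d H ^^ k) (1, \<lambda>i. 0 + 0 * H i, 0) = (r', \<lambda>i. 0 + c' * H i, s')"
    using F by (simp add: z)
  then have e: "(r', \<lambda>i. c' * H i, s') = (1, \<lambda>i. 0, 0)" using h mem by simp
  have "H \<noteq> (\<lambda>i. 0)" using assms(1,2) by (auto simp: k3_form_def)
  then obtain i where "H i \<noteq> 0" by auto
  moreover have "c' * H i = 0" using e by (metis prod.inject)
  ultimately have "c' = 0" by simp
  then show False using e F assms(3) by simp
qed

theorem theoremA9:
  fixes d n :: int and H :: "nat \<Rightarrow> int"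
  assumes "d > 0"
    and "H \<in> K3_lattice"
    and "k3_form H H = 2 * d"
    and "n \<noteq> 0"
  shows "(\<forall>x\<in>mukai_lattice. tau_pow d H (2 * n) x = x) \<longleftrightarrow>
         (\<exists>k::int. k \<noteq> 0 \<and> ((d = 1 \<and> n = 3 * k) \<or> (d = 2 \<and> n = 2 * k) \<or> (d = 3 \<and> n = 3 * k)))"
proof -
  define j where "j = nat \<bar>n\<bar>"
  have j0: "j > 0" using assms(4) by (simp add: j_def)
  define P where "P = (\<forall>x\<in>mukai_lattice. (tau d H ^^ (2 * j)) x = x)"
  have LHS: "(\<forall>x\<in>mukai_lattice. tau_pow d H (2 * n) x = x) \<longleftrightarrow> P"
  proof (cases "n \<ge> 0")
    case True
    then have "nat (2 * n) = 2 * j" by (simp add: j_def)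
    then show ?thesis using True by (simp add: tau_pow_def P_def)
  next
    case False
    then have "nat (- (2 * n)) = 2 * j" by (simp add: j_def)
    then show ?thesis using False inv_equiv[OF assms(2), where d=d and k="2 * j"]
      by (simp add: tau_pow_def P_def)
  qed
  have RHS: "(\<exists>k::int. k \<noteq> 0 \<and> ((d = 1 \<and> n = 3 * k) \<or> (d = 2 \<and> n = 2 * k) \<or> (d = 3 \<and> n = 3 * k)))
     \<longleftrightarrow> ((d = 1 \<or> d = 3) \<and> 3 dvd j) \<or> (d = 2 \<and> 2 dvd j)"
  proof -
    have a3: "(\<exists>k::int. k \<noteq> 0 \<and> n = 3 * k) \<longleftrightarrow> 3 dvd j"
    proof -
      have "(\<exists>k::int. k \<noteq> 0 \<and> n = 3 * k) \<longleftrightarrow> (3::int) dvd n" using assms(4) by (auto simp: dvd_def)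
      also have "\<dots> \<longleftrightarrow> 3 dvd j"
      proof -
        have "(3 dvd nat \<bar>n\<bar>) = (int 3 dvd int (nat \<bar>n\<bar>))" by (rule int_dvd_int_iff[symmetric])
        then show ?thesis unfolding j_def by simp
      qed
      finally show ?thesis .
    qed
    have a2: "(\<exists>k::int. k \<noteq> 0 \<and> n = 2 * k) \<longleftrightarrow> 2 dvd j"
    proof -
      have "(\<exists>k::int. k \<noteq> 0 \<and> n = 2 * k) \<longleftrightarrow> (2::int) dvd n" using assms(4) by (auto simp: dvd_def)
      also have "\<dots> \<longleftrightarrow> 2 dvd j"
      proof -
        have "(2 dvd nat \<bar>n\<bar>) = (int 2 dvd int (nat \<bar>n\<bar>))" by (rule int_dvd_int_iff[symmetric])
        then show ?thesis unfolding j_def by simp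
      qed
      finally show ?thesis .
    qed
    show ?thesis using a2 a3 by auto
  qed
  show ?thesis
  proof -
    have "P \<longleftrightarrow> ((d = 1 \<or> d = 3) \<and> 3 dvd j) \<or> (d = 2 \<and> 2 dvd j)"
    proof (cases "d \<ge> 4")
      case True
      then show ?thesis using notfixed[OF assms(3,1) F_big[OF True j0]] by (simp add: P_def)
    next
      case False
      then have "d = 1 \<or> d = 2 \<or> d = 3" using assms(1) by auto
      then show ?thesis
      proof (elim disjE)
        assume d: "d = 1"
        have m: "\<And>a. Fm d a ^^ (2 * j) = Fm d a ^^ ((2 * j) mod 6)"
          using funpow_mod[OF F1_6] d by blast
        show ?thesis
        proof (cases "3 dvd j")
          case True
          then have "(2 * j) mod 6 = 0" by auto
          then show ?thesis using fixed_from_F[OF assms(3)] m True d by (simp add: P_def)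
        next
          case False
          then have "(2 * j) mod 6 = 2 \<or> (2 * j) mod 6 = 4" by presburger
          then have "(Fm d 0 ^^ (2 * j)) (1, 0, 0) \<noteq> (1, 0, 0)"
            using m[of 0] d c12 c14 by (elim disjE) simp_all
          then show ?thesis using notfixed[OF assms(3,1)] False d by (simp add: P_def)
        qed
      next
        assume d: "d = 3"
        have m: "\<And>a. Fm d a ^^ (2 * j) = Fm d a ^^ ((2 * j) mod 6)"
          using funpow_mod[OF F3_6] d by blast
        show ?thesis
        proof (cases "3 dvd j")
          case True
          then have "(2 * j) mod 6 = 0" by auto
          then show ?thesis using fixed_from_F[OF assms(3)] m True d by (simp add: P_def)
        next
          case False
          then have "(2 * j) mod 6 = 2 \<or> (2 * j) mod 6 = 4" by presburger
          then have "(Fm d 0 ^^ (2 * j)) (1, 0, 0) \<noteq> (1, 0, 0)"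
            using m[of 0] d c32 c34 by (elim disjE) simp_all
          then show ?thesis using notfixed[OF assms(3,1)] False d by (simp add: P_def)
        qed
      next
        assume d: "d = 2"
        have m: "\<And>a. Fm d a ^^ (2 * j) = Fm d a ^^ ((2 * j) mod 4)"
          using funpow_mod[OF F2_4] d by blast
        show ?thesis
        proof (cases "2 dvd j")
          case True
          then have "(2 * j) mod 4 = 0" by auto
          then show ?thesis using fixed_from_F[OF assms(3)] m True d by (simp add: P_def)
        next
          case False
          then have "(2 * j) mod 4 = 2" by presburger
          then have "(Fm d 0 ^^ (2 * j)) (1, 0, 0) \<noteq> (1, 0, 0)"
            using m[of 0] d c22 by simp
          then show ?thesis using notfixed[OF assms(3,1)] False d by (simp add: P_def)
        qed
      qed
    qed
    then show ?thesis using LHS RHS by simp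
  qed
qed

end
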